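(* Suppose $A$ is a simple quotient algebra of $\mathcal{A}(D)$. If $G$ induces a group of automorphisms on $A$ (i.e., the action of $G$ on $\mathcal{A}(D)$ descends to $A$), then $A$ is isomorphic to $\mathcal{A}(D)/\mathcal{V}(D)$.
   Context: Let $G$ be a group generated by a conjugacy class $D$ of involutions such that for all $d,e\in D$ the order of $de$ is $1$, $2$ or $3$. Lines of the Fischer space on $D$ are triples $\{d,e,d^e\}$ with $d,e\in D$ non-commuting. $\mathcal{A}(D)$ is the $\mathbb{F}_2$-vector space with basis $D$, with bilinear product determined by $d*e=d+e+f$ if $\{d,e,f\}$ is a line and $d*e=0$ otherwise; $G$ acts on it by linear extension of conjugation. The bilinear form $\langle\cdot,\cdot\rangle$ is determined by $\langle d,e\rangle=1$ if $d,e$ do not commute and $0$ otherwise; $\mathcal{V}(D)$ is its radical. *)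

theory Defs
  imports "HOL-Algebra.Algebra" "HOL-Library.Z2"
begin

text \<open>Vectors of the F_2-space with basis D are finitely supported functions
  'g => bit vanishing outside D.\<close>

definition supp :: "('g \<Rightarrow> bit) \<Rightarrow> 'g set" where
  "supp v = {x. v x \<noteq> 0}"

definition AD :: "'g set \<Rightarrow> ('g \<Rightarrow> bit) set" where
  "AD D = {v. finite (supp v) \<and> supp v \<subseteq> D}"

definition vadd :: "('g \<Rightarrow> bit) \<Rightarrow> ('g \<Rightarrow> bit) \<Rightarrow> ('g \<Rightarrow> bit)" where
  "vadd v w = (\<lambda>x. v x + w x)"

definition vzero :: "'g \<Rightarrow> bit" where
  "vzero = (\<lambda>_. 0)"

definition commutes :: "('g, 'b) monoid_scheme \<Rightarrow> 'g \<Rightarrow> 'g \<Rightarrow> bool" where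
  "commutes G d e \<longleftrightarrow> d \<otimes>\<^bsub>G\<^esub> e = e \<otimes>\<^bsub>G\<^esub> d"

definition bprod :: "('g, 'b) monoid_scheme \<Rightarrow> 'g \<Rightarrow> 'g \<Rightarrow> ('g \<Rightarrow> bit)" where
  "bprod G d e = (if commutes G d e then vzero
     else (\<lambda>x. if x \<in> {d, e, inv\<^bsub>G\<^esub> e \<otimes>\<^bsub>G\<^esub> d \<otimes>\<^bsub>G\<^esub> e} then 1 else 0))"

definition amult :: "('g, 'b) monoid_scheme \<Rightarrow> ('g \<Rightarrow> bit) \<Rightarrow> ('g \<Rightarrow> bit) \<Rightarrow> ('g \<Rightarrow> bit)" where
  "amult G v w = (\<lambda>x. \<Sum>d\<in>supp v. \<Sum>e\<in>supp w. v d * w e * bprod G d e x)"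

definition bform :: "('g, 'b) monoid_scheme \<Rightarrow> ('g \<Rightarrow> bit) \<Rightarrow> ('g \<Rightarrow> bit) \<Rightarrow> bit" where
  "bform G v w = (\<Sum>d\<in>supp v. \<Sum>e\<in>supp w. v d * w e * (if commutes G d e then 0 else 1))"

definition radical :: "('g, 'b) monoid_scheme \<Rightarrow> 'g set \<Rightarrow> ('g \<Rightarrow> bit) set" where
  "radical G D = {v \<in> AD D. \<forall>w \<in> AD D. bform G v w = 0}"

text \<open>Linear extension of conjugation: the basis vector d is mapped to g d g^-1.\<close>
definition act :: "('g, 'b) monoid_scheme \<Rightarrow> 'g \<Rightarrow> ('g \<Rightarrow> bit) \<Rightarrow> ('g \<Rightarrow> bit)" where
  "act G g v = (\<lambda>x. if x \<in> carrier G then v (inv\<^bsub>G\<^esub> g \<otimes>\<^bsub>G\<^esub> x \<otimes>\<^bsub>G\<^esub> g) else 0)"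

text \<open>Ideals of the (commutative) algebra A(D); over F_2 subspaces are the
  additively closed subsets containing 0.\<close>
definition is_ideal :: "('g, 'b) monoid_scheme \<Rightarrow> 'g set \<Rightarrow> ('g \<Rightarrow> bit) set \<Rightarrow> bool" where
  "is_ideal G D I \<longleftrightarrow> I \<subseteq> AD D \<and> vzero \<in> I
     \<and> (\<forall>v\<in>I. \<forall>w\<in>I. vadd v w \<in> I)
     \<and> (\<forall>v\<in>I. \<forall>w\<in>AD D. amult G v w \<in> I \<and> amult G w v \<in> I)"

text \<open>A(D)/I is a simple algebra: it has nonzero product and its only ideals
  are 0 and itself (ideals of A(D)/I correspond to ideals of A(D) containing I).\<close>
definition simple_quotient :: "('g, 'b) monoid_scheme \<Rightarrow> 'g set \<Rightarrow> ('g \<Rightarrow> bit) set \<Rightarrow> bool" where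
  "simple_quotient G D I \<longleftrightarrow> is_ideal G D I
     \<and> (\<exists>v\<in>AD D. \<exists>w\<in>AD D. amult G v w \<notin> I)
     \<and> (\<forall>J. is_ideal G D J \<and> I \<subseteq> J \<longrightarrow> J = I \<or> J = AD D)"

text \<open>The action of G on A(D) descends to A(D)/I.\<close>
definition G_invariant :: "('g, 'b) monoid_scheme \<Rightarrow> ('g \<Rightarrow> bit) set \<Rightarrow> bool" where
  "G_invariant G I \<longleftrightarrow> (\<forall>g\<in>carrier G. \<forall>v\<in>I. act G g v \<in> I)"

text \<open>A(D)/I and A(D)/J are isomorphic F_2-algebras, written on representatives:
  psi induces a well-defined, injective, surjective, additive and multiplicative
  map from A(D)/I to A(D)/J (over F_2, additivity gives linearity).\<close>
definition quot_iso :: "('g, 'b) monoid_scheme \<Rightarrow> 'g set \<Rightarrow> ('g \<Rightarrow> bit) set \<Rightarrow> ('g \<Rightarrow> bit) set \<Rightarrow> bool" where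
  "quot_iso G D I J \<longleftrightarrow> (\<exists>\<psi>. \<psi> ` AD D \<subseteq> AD D
     \<and> (\<forall>v\<in>AD D. \<forall>w\<in>AD D. vadd (\<psi> v) (\<psi> w) \<in> J \<longleftrightarrow> vadd v w \<in> I)
     \<and> (\<forall>u\<in>AD D. \<exists>v\<in>AD D. vadd (\<psi> v) u \<in> J)
     \<and> (\<forall>v\<in>AD D. \<forall>w\<in>AD D. vadd (\<psi> (vadd v w)) (vadd (\<psi> v) (\<psi> w)) \<in> J)
     \<and> (\<forall>v\<in>AD D. \<forall>w\<in>AD D. vadd (\<psi> (amult G v w)) (amult G (\<psi> v) (\<psi> w)) \<in> J))"

end

theory Submission
  imports Defs
begin

declare mult_bit_eq_and[simp del] add_bit_eq_xor[simp del]

lemma bit_cases: "(x::bit) = 0 \<or> x = 1"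
  by (cases "x = 0") simp_all

lemma bit_add_self [simp]: "(x::bit) + x = 0"
  using bit_cases[of x] by auto

lemma bit_cancel: "(a::bit) = a + b + c + b + c"
  by (metis add.assoc add.commute bit_add_self add_0_right)

lemma vadd_self [simp]: "vadd v v = vzero"
  by (simp add: vadd_def vzero_def)

lemma supp_vzero [simp]: "supp vzero = {}"
  by (simp add: supp_def vzero_def)

lemma supp_val: "d \<in> supp v \<Longrightarrow> v d = 1"
  by (simp add: supp_def)

lemma not_supp_val: "d \<notin> supp v \<Longrightarrow> v d = 0"
  by (simp add: supp_def)

definition delta :: "'g \<Rightarrow> 'g \<Rightarrow> bit" where
  "delta a = (\<lambda>x. if x = a then 1 else 0)"

lemma supp_delta [simp]: "supp (delta a) = {a}"
  by (auto simp: supp_def delta_def)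

lemma delta_AD: "a \<in> D \<Longrightarrow> delta a \<in> AD D"
  by (simp add: AD_def)

definition cc :: "('g, 'b) monoid_scheme \<Rightarrow> 'g \<Rightarrow> 'g \<Rightarrow> bit" where
  "cc G d e = (if commutes G d e then 0 else 1)"

lemma cc_sym: "cc G d e = cc G e d"
  by (auto simp: cc_def commutes_def)

definition beta :: "('g, 'b) monoid_scheme \<Rightarrow> ('g \<Rightarrow> bit) \<Rightarrow> 'g \<Rightarrow> bit" where
  "beta G v e = (\<Sum>d\<in>supp v. v d * cc G d e)"

lemma bform_expand:
  "bform G v w = (\<Sum>e\<in>supp w. w e * beta G v e)"
  unfolding bform_def beta_def cc_def
  by (subst sum.swap) (simp add: sum_distrib_left mult_ac)

lemma beta_sup:
  assumes "finite A" "supp v \<subseteq> A"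
  shows "beta G v e = (\<Sum>d\<in>A. v d * cc G d e)"
  unfolding beta_def
  by (rule sum.mono_neutral_left) (use assms in \<open>auto simp: supp_def\<close>)

lemma supp_vadd: "supp (vadd v w) \<subseteq> supp v \<union> supp w"
  by (auto simp: supp_def vadd_def)

lemma beta_add:
  assumes "finite (supp v)" "finite (supp w)"
  shows "beta G (vadd v w) e = beta G v e + beta G w e"
proof -
  let ?A = "supp v \<union> supp w"
  have "beta G (vadd v w) e = (\<Sum>d\<in>?A. vadd v w d * cc G d e)"
    by (rule beta_sup) (use assms supp_vadd[of v w] in auto)
  also have "\<dots> = (\<Sum>d\<in>?A. v d * cc G d e) + (\<Sum>d\<in>?A. w d * cc G d e)"
    by (simp add: vadd_def distrib_right sum.distrib)
  also have "\<dots> = beta G v e + beta G w e"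
  proof -
    have "beta G v e = (\<Sum>d\<in>?A. v d * cc G d e)" "beta G w e = (\<Sum>d\<in>?A. w d * cc G d e)"
      by (rule beta_sup; use assms in auto)+
    then show ?thesis by simp
  qed
  finally show ?thesis .
qed

lemma vadd_AD: "v \<in> AD D \<Longrightarrow> w \<in> AD D \<Longrightarrow> vadd v w \<in> AD D"
  unfolding AD_def using supp_vadd[of v w] by (auto intro: finite_subset)

lemma amult_expand:
  "amult G w v x = (\<Sum>e\<in>supp w. w e * amult G (delta e) v x)"
proof -
  have "amult G (delta e) v x = (\<Sum>f\<in>supp v. v f * bprod G e f x)" for e
    unfolding amult_def supp_delta by (simp add: delta_def)
  then show ?thesis unfolding amult_def by (simp add: sum_distrib_left mult_ac)
qed

lemma sum_closed:
  assumes "finite S" "vzero \<in> R" "\<And>a b. a \<in> R \<Longrightarrow> b \<in> R \<Longrightarrow> vadd a b \<in> R"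
    "\<And>e. e \<in> S \<Longrightarrow> f e \<in> R"
  shows "(\<lambda>x. \<Sum>e\<in>S. f e x) \<in> R"
  using assms(1,4)
proof (induction S rule: finite_induct)
  case empty then show ?case using assms(2) by (simp add: vzero_def)
next
  case (insert a S)
  have "(\<lambda>x. \<Sum>e\<in>insert a S. f e x) = vadd (f a) (\<lambda>x. \<Sum>e\<in>S. f e x)"
    using insert by (simp add: vadd_def)
  then show ?case using insert assms(3) by auto
qed

lemma AD_decomp:
  assumes "v \<in> AD D"
  shows "v = (\<lambda>x. \<Sum>e\<in>supp v. delta e x)"
proof
  fix x
  have "(\<Sum>e\<in>supp v. delta e x) = (if x \<in> supp v then 1 else 0)"
    unfolding delta_def using assms by (simp add: AD_def sum.delta)
  then show "v x = (\<Sum>e\<in>supp v. delta e x)"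
    by (auto simp: supp_def)
qed


locale tc = group G for G (structure) +
  fixes D
  assumes Dsub: "D \<subseteq> carrier G"
    and Dcl: "\<exists>x\<in>carrier G. D = {g \<otimes> x \<otimes> inv g | g. g \<in> carrier G}"
    and Dinvol: "\<forall>d\<in>D. d \<noteq> \<one> \<and> d \<otimes> d = \<one>"
    and Dord: "\<forall>d\<in>D. \<forall>e\<in>D. ord (d \<otimes> e) \<in> {1, 2, 3}"
begin

lemma cancel_l: "h \<in> carrier G \<Longrightarrow> z \<in> carrier G \<Longrightarrow> inv h \<otimes> (h \<otimes> z) = z"
  by (simp add: m_assoc[symmetric])

lemma Dc: "d \<in> D \<Longrightarrow> d \<in> carrier G"
  using Dsub by auto

lemma inv_D: "d \<in> D \<Longrightarrow> inv d = d"
  using Dinvol Dc by (metis inv_equality)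

lemma conj_D:
  assumes "g \<in> carrier G" "d \<in> D"
  shows "g \<otimes> d \<otimes> inv g \<in> D"
proof -
  obtain x where x: "x \<in> carrier G" "D = {g \<otimes> x \<otimes> inv g | g. g \<in> carrier G}" using Dcl by blast
  then obtain h where h: "h \<in> carrier G" "d = h \<otimes> x \<otimes> inv h" using assms by auto
  have "g \<otimes> d \<otimes> inv g = (g \<otimes> h) \<otimes> x \<otimes> inv (g \<otimes> h)"
    using h x assms by (simp add: inv_mult_group m_assoc)
  then show ?thesis using x h assms by auto
qed

lemma D_trans:
  assumes "d \<in> D" "e \<in> D"
  shows "\<exists>g\<in>carrier G. e = g \<otimes> d \<otimes> inv g"
proof -
  obtain x where x: "x \<in> carrier G" "D = {g \<otimes> x \<otimes> inv g | g. g \<in> carrier G}" using Dcl by blast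
  then obtain h k where h: "h \<in> carrier G" "d = h \<otimes> x \<otimes> inv h"
     and k: "k \<in> carrier G" "e = k \<otimes> x \<otimes> inv k" using assms by auto
  have "(k \<otimes> inv h) \<otimes> d \<otimes> inv (k \<otimes> inv h) = e"
    using h k x by (simp add: inv_mult_group m_assoc cancel_l)
  then show ?thesis using h k by (metis inv_closed m_closed)
qed

lemma braid:
  assumes "d \<in> D" "e \<in> D" "\<not> commutes G d e"
  shows "inv e \<otimes> d \<otimes> e = d \<otimes> e \<otimes> inv d"
proof -
  have dc: "d \<in> carrier G" "e \<in> carrier G" using assms Dc by auto
  have dd: "d \<otimes> d = \<one>" "e \<otimes> e = \<one>" using assms Dinvol by auto
  have o: "ord (d \<otimes> e) \<in> {1,2,3}" using Dord assms by auto
  have p: "(d \<otimes> e) [^] ord (d \<otimes> e) = \<one>" using dc by simp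
  have ide: "inv d = d" "inv e = e" using inv_D assms by auto
  consider "ord (d \<otimes> e) = 1" | "ord (d \<otimes> e) = 2" | "ord (d \<otimes> e) = 3" using o by auto
  then show ?thesis
  proof cases
    case 1
    then have "d \<otimes> e = \<one>" using p dc by simp
    then have "e = d" using dc ide by (metis inv_equality)
    then show ?thesis using assms by (simp add: commutes_def)
  next
    case 2
    then have "(d \<otimes> e) \<otimes> (d \<otimes> e) = \<one>" using p dc by (simp add: numeral_2_eq_2 nat_pow_Suc2 nat_pow_Suc)
    then have "inv (d \<otimes> e) = d \<otimes> e" using dc by (metis inv_equality m_closed)
    then have "d \<otimes> e = e \<otimes> d" using dc ide by (simp add: inv_mult_group)
    then show ?thesis using assms by (simp add: commutes_def)
  next
    case 3
    then have "(d \<otimes> e) \<otimes> (d \<otimes> e) \<otimes> (d \<otimes> e) = \<one>" using p dc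
      by (simp add: numeral_3_eq_3 numeral_2_eq_2 nat_pow_Suc2 nat_pow_Suc)
    then have "(d \<otimes> e \<otimes> d) \<otimes> (e \<otimes> d \<otimes> e) = \<one>" using dc by (simp add: m_assoc)
    then have "inv (e \<otimes> d \<otimes> e) = d \<otimes> e \<otimes> d" using dc by (metis inv_equality m_closed)
    then have "e \<otimes> d \<otimes> e = d \<otimes> e \<otimes> d" using dc ide by (simp add: inv_mult_group m_assoc)
    then show ?thesis using ide by simp
  qed
qed


lemma conj_back: "g \<in> carrier G \<Longrightarrow> x \<in> carrier G \<Longrightarrow> inv g \<otimes> (g \<otimes> x \<otimes> inv g) \<otimes> g = x"
  by (simp add: m_assoc[symmetric]) (simp add: m_assoc)

lemma conj_fwd: "g \<in> carrier G \<Longrightarrow> x \<in> carrier G \<Longrightarrow> g \<otimes> (inv g \<otimes> x \<otimes> g) \<otimes> inv g = x"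
  by (simp add: m_assoc[symmetric]) (simp add: m_assoc)

lemma conj_eq_iff:
  assumes "g \<in> carrier G" "x \<in> carrier G" "y \<in> carrier G"
  shows "(x = g \<otimes> y \<otimes> inv g) \<longleftrightarrow> (y = inv g \<otimes> x \<otimes> g)"
  using assms conj_back conj_fwd by metis

lemma bprod_formula:
  assumes "d \<in> D" "e \<in> D"
  shows "bprod G d e x = cc G d e * delta d x + delta e x + delta (d \<otimes> e \<otimes> inv d) x"
proof (cases "commutes G d e")
  case True
  have dc: "d \<in> carrier G" "e \<in> carrier G" using assms Dc by auto
  have "d \<otimes> e \<otimes> inv d = e" using True dc by (simp add: commutes_def m_assoc)
  then show ?thesis using True by (simp add: bprod_def cc_def vzero_def)
next
  case False
  have dc: "d \<in> carrier G" "e \<in> carrier G" using assms Dc by auto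
  have ide: "inv d = d" "inv e = e" using inv_D assms by auto
  have b: "inv e \<otimes> d \<otimes> e = d \<otimes> e \<otimes> inv d" using braid assms False by blast
  have n1: "d \<noteq> e" using False by (auto simp: commutes_def)
  have n2: "d \<otimes> e \<otimes> inv d \<noteq> d"
  proof
    assume h: "d \<otimes> e \<otimes> inv d = d"
    have "e = inv d \<otimes> (d \<otimes> e \<otimes> inv d) \<otimes> d" using conj_back dc by simp
    also have "\<dots> = d" using h dc ide Dinvol assms by (simp add: m_assoc)
    finally show False using n1 by simp
  qed
  have n3: "d \<otimes> e \<otimes> inv d \<noteq> e"
  proof
    assume h: "d \<otimes> e \<otimes> inv d = e"
    have "d \<otimes> e = (d \<otimes> e \<otimes> inv d) \<otimes> d" using dc by (simp add: m_assoc)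
    also have "\<dots> = e \<otimes> d" using h by simp
    finally show False using False by (simp add: commutes_def)
  qed
  show ?thesis using False n1 n2 n3 b
    by (auto simp: bprod_def cc_def delta_def)
qed

lemma bprod_sym:
  assumes "d \<in> D" "e \<in> D"
  shows "bprod G d e = bprod G e d"
proof (cases "commutes G d e")
  case True
  then show ?thesis by (simp add: bprod_def commutes_def)
next
  case False
  then have F: "\<not> commutes G e d" by (auto simp: commutes_def)
  have "inv e \<otimes> d \<otimes> e = d \<otimes> e \<otimes> inv d" using braid assms False by blast
  moreover have "inv d \<otimes> e \<otimes> d = e \<otimes> d \<otimes> inv e" using braid assms F by blast
  moreover have "inv d = d" "inv e = e" using inv_D assms by auto
  ultimately have "inv e \<otimes> d \<otimes> e = inv d \<otimes> e \<otimes> d" by simp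
  then show ?thesis using False F by (auto simp: bprod_def)
qed

lemma amult_comm:
  assumes "v \<in> AD D" "w \<in> AD D"
  shows "amult G v w = amult G w v"
proof
  fix x
  have "amult G v w x = (\<Sum>e\<in>supp w. \<Sum>d\<in>supp v. v d * w e * bprod G d e x)"
    unfolding amult_def by (rule sum.swap)
  also have "\<dots> = (\<Sum>e\<in>supp w. \<Sum>d\<in>supp v. w e * v d * bprod G e d x)"
  proof (intro sum.cong refl)
    fix e d assume "e \<in> supp w" "d \<in> supp v"
    then have "e \<in> D" "d \<in> D" using assms by (auto simp: AD_def)
    then show "v d * w e * bprod G d e x = w e * v d * bprod G e d x"
      using bprod_sym by (simp add: mult_ac)
  qed
  finally show "amult G v w x = amult G w v x" by (simp add: amult_def)
qed

lemma act_val: "g \<in> carrier G \<Longrightarrow> x \<in> carrier G \<Longrightarrow> act G g v x = v (inv g \<otimes> x \<otimes> g)"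
  by (auto simp: act_def)

lemma act_out: "x \<notin> carrier G \<Longrightarrow> act G g v x = 0"
  by (auto simp: act_def)

lemma supp_act:
  assumes "g \<in> carrier G" "v \<in> AD D"
  shows "supp (act G g v) = (\<lambda>d. g \<otimes> d \<otimes> inv g) ` supp v"
proof -
  have sv: "supp v \<subseteq> carrier G" using assms Dsub by (auto simp: AD_def)
  show ?thesis
  proof (intro equalityI subsetI)
    fix x assume "x \<in> supp (act G g v)"
    then have x: "x \<in> carrier G" "v (inv g \<otimes> x \<otimes> g) \<noteq> 0" by (auto simp: act_def supp_def split: if_splits)
    then have "x = g \<otimes> (inv g \<otimes> x \<otimes> g) \<otimes> inv g" using conj_fwd assms by simp
    then show "x \<in> (\<lambda>d. g \<otimes> d \<otimes> inv g) ` supp v" using x by (auto simp: supp_def)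
  next
    fix x assume "x \<in> (\<lambda>d. g \<otimes> d \<otimes> inv g) ` supp v"
    then obtain d where d: "d \<in> supp v" "x = g \<otimes> d \<otimes> inv g" by auto
    have "d \<in> carrier G" using d sv by auto
    then show "x \<in> supp (act G g v)" using d assms conj_back
      by (auto simp: act_def supp_def)
  qed
qed

lemma act_AD:
  assumes "g \<in> carrier G" "v \<in> AD D"
  shows "act G g v \<in> AD D"
  using supp_act[OF assms] assms conj_D by (auto simp: AD_def)

lemma act_delta:
  assumes "g \<in> carrier G" "a \<in> carrier G"
  shows "act G g (delta a) = delta (g \<otimes> a \<otimes> inv g)"
proof
  fix x
  show "act G g (delta a) x = delta (g \<otimes> a \<otimes> inv g) x"
  proof (cases "x \<in> carrier G")
    case True
    have "(x = g \<otimes> a \<otimes> inv g) \<longleftrightarrow> (a = inv g \<otimes> x \<otimes> g)"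
      using conj_eq_iff[OF assms(1) True assms(2)] .
    then show ?thesis using True by (auto simp: act_def delta_def)
  next
    case False
    then have "x \<noteq> g \<otimes> a \<otimes> inv g" using assms by auto
    then show ?thesis using False by (simp add: act_def delta_def)
  qed
qed


lemma amult_delta_raw: "amult G (delta d) v x = (\<Sum>f\<in>supp v. v f * bprod G d f x)"
  unfolding amult_def supp_delta by (simp add: delta_def)

lemma sum_delta_supp: "finite (supp v) \<Longrightarrow> (\<Sum>f\<in>supp v. delta f x) = v x"
  unfolding delta_def by (auto simp: sum.delta supp_def)

lemma amult_delta:
  assumes "d \<in> D" "v \<in> AD D"
  shows "amult G (delta d) v = (\<lambda>x. beta G v d * delta d x + v x + act G d v x)"
proof
  fix x
  have fin: "finite (supp v)" and sD: "supp v \<subseteq> D" using assms by (auto simp: AD_def)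
  have dc: "d \<in> carrier G" using assms Dc by auto
  have "amult G (delta d) v x = (\<Sum>f\<in>supp v. cc G d f * delta d x + delta f x + delta (d \<otimes> f \<otimes> inv d) x)"
    unfolding amult_delta_raw
    using sD by (intro sum.cong refl) (auto simp: supp_val bprod_formula assms(1))
  also have "\<dots> = (\<Sum>f\<in>supp v. cc G d f) * delta d x + (\<Sum>f\<in>supp v. delta f x)
       + (\<Sum>f\<in>supp v. delta (d \<otimes> f \<otimes> inv d) x)"
    by (simp add: sum.distrib sum_distrib_right)
  also have "(\<Sum>f\<in>supp v. cc G d f) = beta G v d"
    unfolding beta_def by (intro sum.cong refl) (auto simp: supp_val cc_sym)
  also have "(\<Sum>f\<in>supp v. delta f x) = v x" using fin by (rule sum_delta_supp)
  also have "(\<Sum>f\<in>supp v. delta (d \<otimes> f \<otimes> inv d) x) = act G d v x"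
  proof (cases "x \<in> carrier G")
    case True
    have "(\<Sum>f\<in>supp v. delta (d \<otimes> f \<otimes> inv d) x) = (\<Sum>f\<in>supp v. if inv d \<otimes> x \<otimes> d = f then 1 else 0)"
    proof (intro sum.cong refl)
      fix f assume "f \<in> supp v"
      then have "f \<in> carrier G" using sD Dc by auto
      then show "delta (d \<otimes> f \<otimes> inv d) x = (if inv d \<otimes> x \<otimes> d = f then 1 else 0)"
        using conj_eq_iff[OF dc True] by (auto simp: delta_def)
    qed
    also have "\<dots> = v (inv d \<otimes> x \<otimes> d)" using fin by (auto simp: sum.delta supp_def)
    finally show ?thesis using True dc by (simp add: act_val)
  next
    case False
    have "(\<Sum>f\<in>supp v. delta (d \<otimes> f \<otimes> inv d) x) = 0"
    proof (intro sum.neutral ballI)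
      fix f assume "f \<in> supp v"
      then have "f \<in> carrier G" using sD Dc by auto
      then have "d \<otimes> f \<otimes> inv d \<noteq> x" using False dc by auto
      then show "delta (d \<otimes> f \<otimes> inv d) x = 0" by (auto simp: delta_def)
    qed
    then show ?thesis using False by (simp add: act_out)
  qed
  finally show "amult G (delta d) v x = beta G v d * delta d x + v x + act G d v x" .
qed

lemma conj_mult: "g \<in> carrier G \<Longrightarrow> x \<in> carrier G \<Longrightarrow> y \<in> carrier G \<Longrightarrow>
   (g \<otimes> x \<otimes> inv g) \<otimes> (g \<otimes> y \<otimes> inv g) = g \<otimes> (x \<otimes> y) \<otimes> inv g"
  by (simp add: m_assoc cancel_l)

lemma conj_inj: "g \<in> carrier G \<Longrightarrow> x \<in> carrier G \<Longrightarrow> y \<in> carrier G \<Longrightarrow>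
   g \<otimes> x \<otimes> inv g = g \<otimes> y \<otimes> inv g \<Longrightarrow> x = y"
  by (metis conj_back)

lemma commutes_conj:
  assumes "g \<in> carrier G" "d \<in> carrier G" "e \<in> carrier G"
  shows "commutes G (g \<otimes> d \<otimes> inv g) e \<longleftrightarrow> commutes G d (inv g \<otimes> e \<otimes> g)"
proof -
  let ?h = "inv g \<otimes> e \<otimes> g"
  have hc: "?h \<in> carrier G" using assms by auto
  have e: "e = g \<otimes> ?h \<otimes> inv g" using conj_fwd assms by simp
  have "commutes G (g \<otimes> d \<otimes> inv g) e \<longleftrightarrow>
        g \<otimes> (d \<otimes> ?h) \<otimes> inv g = g \<otimes> (?h \<otimes> d) \<otimes> inv g"
    unfolding commutes_def by (subst (1 2) e) (simp only: conj_mult assms hc)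
  also have "\<dots> \<longleftrightarrow> d \<otimes> ?h = ?h \<otimes> d"
  proof
    assume a: "g \<otimes> (d \<otimes> ?h) \<otimes> inv g = g \<otimes> (?h \<otimes> d) \<otimes> inv g"
    have "d \<otimes> ?h \<in> carrier G" "?h \<otimes> d \<in> carrier G" using assms hc by auto
    then show "d \<otimes> ?h = ?h \<otimes> d" using conj_inj[OF assms(1) _ _ a] by blast
  qed simp
  finally show ?thesis by (simp add: commutes_def)
qed

lemma beta_act:
  assumes "g \<in> carrier G" "v \<in> AD D" "e \<in> carrier G"
  shows "beta G (act G g v) e = beta G v (inv g \<otimes> e \<otimes> g)"
proof -
  have sv: "supp v \<subseteq> carrier G" using assms Dsub by (auto simp: AD_def)
  have inj: "inj_on (\<lambda>d. g \<otimes> d \<otimes> inv g) (supp v)"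
    using conj_inj[OF assms(1)] sv by (auto simp: inj_on_def)
  have "beta G (act G g v) e = (\<Sum>d\<in>supp v. act G g v (g \<otimes> d \<otimes> inv g) * cc G (g \<otimes> d \<otimes> inv g) e)"
    unfolding beta_def supp_act[OF assms(1,2)] sum.reindex[OF inj] by simp
  also have "\<dots> = beta G v (inv g \<otimes> e \<otimes> g)"
    unfolding beta_def
  proof (intro sum.cong refl)
    fix d assume "d \<in> supp v"
    then have dc: "d \<in> carrier G" using sv by auto
    show "act G g v (g \<otimes> d \<otimes> inv g) * cc G (g \<otimes> d \<otimes> inv g) e = v d * cc G d (inv g \<otimes> e \<otimes> g)"
      using dc assms conj_back commutes_conj[OF assms(1) dc assms(3)]
      by (simp add: act_val cc_def)
  qed
  finally show ?thesis .
qed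


lemma beta_delta: "beta G (delta d) e = cc G d e"
  unfolding beta_def supp_delta by (simp add: delta_def)

lemma radical_char: "v \<in> radical G D \<longleftrightarrow> v \<in> AD D \<and> (\<forall>e\<in>D. beta G v e = 0)"
proof
  assume r: "v \<in> radical G D"
  show "v \<in> AD D \<and> (\<forall>e\<in>D. beta G v e = 0)"
  proof (intro conjI ballI)
    show "v \<in> AD D" using r by (simp add: radical_def)
    fix e assume "e \<in> D"
    then have "delta e \<in> AD D" by (rule delta_AD)
    then have "bform G v (delta e) = 0" using r unfolding radical_def by blast
    then show "beta G v e = 0" unfolding bform_expand supp_delta by (simp add: delta_def)
  qed
next
  assume h: "v \<in> AD D \<and> (\<forall>e\<in>D. beta G v e = 0)"
  show "v \<in> radical G D" unfolding radical_def
  proof (intro CollectI conjI ballI)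
    show "v \<in> AD D" using h by simp
    fix w assume "w \<in> AD D"
    then have "supp w \<subseteq> D" by (simp add: AD_def)
    then show "bform G v w = 0" unfolding bform_expand using h
      by (intro sum.neutral) auto
  qed
qed

lemma rad_vzero: "vzero \<in> radical G D"
  unfolding radical_char AD_def beta_def by simp

lemma rad_vadd:
  assumes "v \<in> radical G D" "w \<in> radical G D"
  shows "vadd v w \<in> radical G D"
proof -
  have a: "v \<in> AD D" "w \<in> AD D" "\<forall>e\<in>D. beta G v e = 0" "\<forall>e\<in>D. beta G w e = 0"
    using assms radical_char by auto
  have "vadd v w \<in> AD D" using a(1,2) by (rule vadd_AD)
  moreover have "finite (supp v)" "finite (supp w)" using a by (auto simp: AD_def)
  ultimately show ?thesis using a by (simp add: radical_char beta_add)
qed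

lemma rad_act:
  assumes "g \<in> carrier G" "v \<in> radical G D"
  shows "act G g v \<in> radical G D"
proof -
  have v: "v \<in> AD D" "\<forall>e\<in>D. beta G v e = 0" using assms radical_char by auto
  have "beta G (act G g v) e = 0" if e: "e \<in> D" for e
  proof -
    have "inv g \<otimes> e \<otimes> inv (inv g) \<in> D" using conj_D[of "inv g" e] e assms by auto
    then have "inv g \<otimes> e \<otimes> g \<in> D" using assms by simp
    then show ?thesis using beta_act[OF assms(1) v(1)] e Dc v by simp
  qed
  then show ?thesis using act_AD[OF assms(1) v(1)] by (simp add: radical_char)
qed

lemma rad_mult:
  assumes "v \<in> radical G D" "w \<in> AD D"
  shows "amult G w v \<in> radical G D"
proof -
  have v: "v \<in> AD D" "\<forall>e\<in>D. beta G v e = 0" using assms radical_char by auto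
  have sw: "supp w \<subseteq> D" "finite (supp w)" using assms by (auto simp: AD_def)
  have "amult G w v = (\<lambda>x. \<Sum>e\<in>supp w. vadd v (act G e v) x)"
  proof
    fix x
    show "amult G w v x = (\<Sum>e\<in>supp w. vadd v (act G e v) x)"
    proof (rule trans[OF amult_expand], intro sum.cong refl)
      fix e assume e: "e \<in> supp w"
      then have "e \<in> D" using sw by auto
      then have "amult G (delta e) v = vadd v (act G e v)"
        using amult_delta[OF _ v(1)] v(2) by (simp add: vadd_def)
      then show "w e * amult G (delta e) v x = vadd v (act G e v) x"
        using supp_val[OF e] by simp
    qed
  qed
  also have "\<dots> \<in> radical G D"
  proof (rule sum_closed[OF sw(2) rad_vzero])
    show "\<And>a b. a \<in> radical G D \<Longrightarrow> b \<in> radical G D \<Longrightarrow> vadd a b \<in> radical G D"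
      by (rule rad_vadd)
    fix e assume "e \<in> supp w"
    then have "e \<in> carrier G" using sw Dc by auto
    then show "vadd v (act G e v) \<in> radical G D"
      using rad_vadd[OF assms(1) rad_act[OF _ assms(1)]] by blast
  qed
  finally show ?thesis .
qed

end

theorem proposition2p7:
  fixes G :: "('g, 'b) monoid_scheme" and D :: "'g set" and I :: "('g \<Rightarrow> bit) set"
  assumes "group G"
    and "D \<subseteq> carrier G"
    and "\<exists>x\<in>carrier G. D = {g \<otimes>\<^bsub>G\<^esub> x \<otimes>\<^bsub>G\<^esub> inv\<^bsub>G\<^esub> g | g. g \<in> carrier G}"
    and "generate G D = carrier G"
    and "\<forall>d\<in>D. d \<noteq> \<one>\<^bsub>G\<^esub> \<and> d \<otimes>\<^bsub>G\<^esub> d = \<one>\<^bsub>G\<^esub>"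
    and "\<forall>d\<in>D. \<forall>e\<in>D. group.ord G (d \<otimes>\<^bsub>G\<^esub> e) \<in> {1, 2, 3}"
    and "simple_quotient G D I"
    and "G_invariant G I"
  shows "quot_iso G D I (radical G D)"
proof -
  interpret tc G D
    unfolding tc_def tc_axioms_def using assms(1,2,3,5,6) by (intro conjI)
  have idI: "is_ideal G D I" and nz: "\<exists>v\<in>AD D. \<exists>w\<in>AD D. amult G v w \<notin> I"
    and mx: "\<forall>J. is_ideal G D J \<and> I \<subseteq> J \<longrightarrow> J = I \<or> J = AD D"
    using assms(7) by (auto simp: simple_quotient_def)
  have IAD: "I \<subseteq> AD D" and I0: "vzero \<in> I" and Iadd: "\<And>v w. v \<in> I \<Longrightarrow> w \<in> I \<Longrightarrow> vadd v w \<in> I"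
    and Imul: "\<And>v w. v \<in> I \<Longrightarrow> w \<in> AD D \<Longrightarrow> amult G v w \<in> I \<and> amult G w v \<in> I"
    using idI by (auto simp: is_ideal_def)
  have Iact: "\<And>g v. g \<in> carrier G \<Longrightarrow> v \<in> I \<Longrightarrow> act G g v \<in> I"
    using assms(8) by (auto simp: G_invariant_def)
  have IR: "I \<subseteq> radical G D"
  proof
    fix v assume vI: "v \<in> I"
    have vA: "v \<in> AD D" using vI IAD by auto
    have "beta G v e = 0" if eD: "e \<in> D" for e
    proof (rule ccontr)
      assume "beta G v e \<noteq> 0"
      then have b1: "beta G v e = 1" by simp
      have ec: "e \<in> carrier G" using eD Dc by auto
      have "delta e = vadd (vadd (amult G (delta e) v) v) (act G e v)"
      proof
        fix x
        show "delta e x = vadd (vadd (amult G (delta e) v) v) (act G e v) x"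
          unfolding amult_delta[OF eD vA] b1 vadd_def
          by (simp only: mult_1 bit_cancel[symmetric])
      qed
      also have "\<dots> \<in> I"
        using Imul[OF vI delta_AD[OF eD]] vI Iact[OF ec vI] Iadd by auto
      finally have deI: "delta e \<in> I" .
      have all: "delta e' \<in> I" if e'D: "e' \<in> D" for e'
      proof -
        obtain g where g: "g \<in> carrier G" "e' = g \<otimes>\<^bsub>G\<^esub> e \<otimes>\<^bsub>G\<^esub> inv\<^bsub>G\<^esub> g" using D_trans[OF eD e'D] by blast
        then show ?thesis using act_delta[OF g(1) ec] Iact[OF g(1) deI] by simp
      qed
      have "AD D \<subseteq> I"
      proof
        fix u assume u: "u \<in> AD D"
        then have "(\<lambda>x. \<Sum>f\<in>supp u. delta f x) \<in> I"
          using I0 Iadd all by (intro sum_closed) (auto simp: AD_def)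
        then show "u \<in> I" using AD_decomp[OF u] by simp
      qed
      then show False using nz Imul by blast
    qed
    then show "v \<in> radical G D" using vA by (simp add: radical_char)
  qed
  have idR: "is_ideal G D (radical G D)"
    unfolding is_ideal_def
  proof (intro conjI ballI)
    show "radical G D \<subseteq> AD D" by (auto simp: radical_def)
    show "vzero \<in> radical G D" by (rule rad_vzero)
    fix v assume v: "v \<in> radical G D"
    { fix w assume "w \<in> radical G D"
      then show "vadd v w \<in> radical G D" using v rad_vadd by blast }
    fix w assume w: "w \<in> AD D"
    have vA: "v \<in> AD D" using v by (simp add: radical_def)
    show "amult G w v \<in> radical G D" using rad_mult[OF v w] .
    show "amult G v w \<in> radical G D" using rad_mult[OF v w] amult_comm[OF vA w] by simp
  qed
  have RI: "radical G D = I"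
  proof -
    have "radical G D = I \<or> radical G D = AD D" using mx idR IR by blast
    moreover have "radical G D \<noteq> AD D"
    proof
      assume RA: "radical G D = AD D"
      have comm: "commutes G d e" if "d \<in> D" "e \<in> D" for d e
      proof -
        have "delta d \<in> radical G D" using RA delta_AD that by auto
        then have "beta G (delta d) e = 0" using that radical_char by auto
        then show ?thesis by (simp add: beta_delta cc_def split: if_splits)
      qed
      have "amult G v w = vzero" if "v \<in> AD D" "w \<in> AD D" for v w
      proof -
        have "supp v \<subseteq> D" "supp w \<subseteq> D" using that by (auto simp: AD_def)
        then have "\<forall>d\<in>supp v. \<forall>e\<in>supp w. bprod G d e = vzero"
          using comm by (auto simp: bprod_def)
        then show ?thesis unfolding amult_def
          by (intro ext) (simp add: vzero_def)
      qed
      then show False using nz I0 by auto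
    qed
    ultimately show ?thesis by blast
  qed
  show ?thesis unfolding quot_iso_def RI
  proof (rule exI[of _ "\<lambda>v. v"], intro conjI ballI)
    fix u assume u: "u \<in> AD D"
    have "vadd u u \<in> I" using I0 by simp
    then show "\<exists>v\<in>AD D. vadd v u \<in> I" using u by blast
  qed (use I0 in simp_all)
qed

end
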